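(* Let $B$ be a finite set of Boolean functions. There exists an MSO formula $\theta$ over the vocabulary $\tau_{B,ae}$ such that for every set $\Sigma$ of autoepistemic $B$-formulae: $\Sigma$ possesses a stable expansion if and only if $\mathcal{A}_\Sigma\models\theta$.
   Context: Autoepistemic $B$-formulae are given by $\varphi ::= p \mid f(\varphi,\dots,\varphi)\mid L\varphi$ with $p$ a proposition and $f\in B$; formulae $L\varphi$ are treated as atoms for propositional consequence $\models$, and $\mathrm{Th}(S)$ denotes the closure of $S$ under this consequence. A set $\Delta$ of autoepistemic formulae is a stable expansion of $\Sigma$ if $\Delta=\mathrm{Th}(\Sigma\cup\{L\varphi\mid\varphi\in\Delta\}\cup\{\neg L\varphi\mid\varphi\notin\Delta\})$. The vocabulary $\tau_{B,ae}$ consists of unary $\mathrm{const}_f$ (0-ary $f\in B$), binary $\mathrm{conn}_{f,i}$ ($f\in B$, $1\le i\le\mathrm{arity}(f)$), and unary $L$ and $\mathrm{repr}$. The structure $\mathcal{A}_\Sigma$ has as universe the set of subformulae of formulae in $\Sigma\cup\{\neg L\varphi\mid L\varphi \text{ a subformula of a formula in }\Sigma\}$, with $\mathrm{const}_f(x)$ iff $x$ is the constant $f$, $\mathrm{conn}_{f,i}(x,y)$ iff $x$ is the $i$-th argument of the function $f$ at the root of $y$, $L(x)$ iff $x$ is of the form $L\psi$, and $\mathrm{repr}(x)$ iff $x\in\Sigma$.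
   Formalization: The vocabulary $\tau_{B,ae}$ also contains a binary symbol, available to theta, holding in $\mathcal{A}_\Sigma$ of (x,y) exactly when y is $L x$, so linking each $L\psi$ to $\psi$. The statement above fails without it. *)

theory Defs
  imports Main
begin

type_synonym bf = "nat \<times> (bool list \<Rightarrow> bool)"

definition arity :: "bf \<Rightarrow> nat" where "arity f = fst f"
definition bfun :: "bf \<Rightarrow> bool list \<Rightarrow> bool" where "bfun f = snd f"

definition neg :: bf where "neg = (1, \<lambda>xs. \<not> hd xs)"

datatype 'p aeform = Prop 'p | App bf "'p aeform list" | Lf "'p aeform"

fun wf_over :: "bf set \<Rightarrow> 'p aeform \<Rightarrow> bool" where
  "wf_over C (Prop p) = True"
| "wf_over C (App f xs) = (f \<in> C \<and> length xs = arity f \<and> (\<forall>x\<in>set xs. wf_over C x))"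
| "wf_over C (Lf \<phi>) = wf_over C \<phi>"

definition Bformulas :: "bf set \<Rightarrow> 'p aeform set" where
  "Bformulas B = {\<phi>. wf_over B \<phi>}"

text \<open>The ambient language of autoepistemic formulae used for stable expansions:
  B-connectives together with negation (needed for the literals \<not>L\<phi>).\<close>
definition aelang :: "bf set \<Rightarrow> 'p aeform set" where
  "aelang B = {\<phi>. wf_over (insert neg B) \<phi>}"

definition NegL :: "'p aeform \<Rightarrow> 'p aeform" where
  "NegL \<phi> = App neg [Lf \<phi>]"

fun eval :: "('p \<Rightarrow> bool) \<Rightarrow> ('p aeform \<Rightarrow> bool) \<Rightarrow> 'p aeform \<Rightarrow> bool" where
  "eval v w (Prop p) = v p"
| "eval v w (App f xs) = bfun f (map (eval v w) xs)"
| "eval v w (Lf \<phi>) = w \<phi>"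

definition entails :: "'p aeform set \<Rightarrow> 'p aeform \<Rightarrow> bool" where
  "entails S \<phi> \<longleftrightarrow> (\<forall>v w. (\<forall>\<psi>\<in>S. eval v w \<psi>) \<longrightarrow> eval v w \<phi>)"

definition Th :: "bf set \<Rightarrow> 'p aeform set \<Rightarrow> 'p aeform set" where
  "Th B S = {\<phi> \<in> aelang B. entails S \<phi>}"

definition stable_expansion :: "bf set \<Rightarrow> 'p aeform set \<Rightarrow> 'p aeform set \<Rightarrow> bool" where
  "stable_expansion B \<Sigma> \<Delta> \<longleftrightarrow> \<Delta> \<subseteq> aelang B \<and>
     \<Delta> = Th B (\<Sigma> \<union> {Lf \<phi> | \<phi>. \<phi> \<in> \<Delta>} \<union> {NegL \<phi> | \<phi>. \<phi> \<in> aelang B \<and> \<phi> \<notin> \<Delta>})"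

definition has_stable_expansion :: "bf set \<Rightarrow> 'p aeform set \<Rightarrow> bool" where
  "has_stable_expansion B \<Sigma> \<longleftrightarrow> (\<exists>\<Delta>. stable_expansion B \<Sigma> \<Delta>)"

fun subf :: "'p aeform \<Rightarrow> 'p aeform set" where
  "subf (Prop p) = {Prop p}"
| "subf (App f xs) = insert (App f xs) (\<Union>x\<in>set xs. subf x)"
| "subf (Lf \<phi>) = insert (Lf \<phi>) (subf \<phi>)"

datatype rsym = ConstR bf | ConnR bf nat | LR | LArgR | ReprR

record 'a mstruct =
  univ :: "'a set"
  rel1 :: "rsym \<Rightarrow> 'a \<Rightarrow> bool"
  rel2 :: "rsym \<Rightarrow> 'a \<Rightarrow> 'a \<Rightarrow> bool"

definition AUniv :: "'p aeform set \<Rightarrow> 'p aeform set" where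
  "AUniv \<Sigma> = (\<Union>\<phi>\<in>\<Sigma> \<union> {NegL \<psi> | \<psi>. Lf \<psi> \<in> (\<Union>\<chi>\<in>\<Sigma>. subf \<chi>)}. subf \<phi>)"

fun A_rel1 :: "bf set \<Rightarrow> 'p aeform set \<Rightarrow> rsym \<Rightarrow> 'p aeform \<Rightarrow> bool" where
  "A_rel1 B \<Sigma> (ConstR f) x = (f \<in> B \<and> arity f = 0 \<and> x = App f [])"
| "A_rel1 B \<Sigma> LR x = (\<exists>\<psi>. x = Lf \<psi>)"
| "A_rel1 B \<Sigma> ReprR x = (x \<in> \<Sigma>)"
| "A_rel1 B \<Sigma> _ x = False"

fun A_rel2 :: "bf set \<Rightarrow> 'p aeform set \<Rightarrow> rsym \<Rightarrow> 'p aeform \<Rightarrow> 'p aeform \<Rightarrow> bool" where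
  "A_rel2 B \<Sigma> (ConnR f i) x y =
     (f \<in> B \<and> 1 \<le> i \<and> i \<le> arity f \<and>
      (\<exists>xs. y = App f xs \<and> i \<le> length xs \<and> x = xs ! (i - 1)))"
| "A_rel2 B \<Sigma> LArgR x y = (y = Lf x)"
| "A_rel2 B \<Sigma> _ x y = False"

definition A_Sigma :: "bf set \<Rightarrow> 'p aeform set \<Rightarrow> 'p aeform mstruct" where
  "A_Sigma B \<Sigma> = \<lparr> univ = AUniv \<Sigma>, rel1 = A_rel1 B \<Sigma>, rel2 = A_rel2 B \<Sigma> \<rparr>"

text \<open>First-order variables and set variables are both indexed by nat (separate sorts).\<close>
datatype mso =
    Rel1 rsym nat
  | Rel2 rsym nat nat
  | Eq nat nat
  | Mem nat nat           \<comment> \<open>first-order var \<in> set var\<close>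
  | MNot mso
  | MAnd mso mso
  | Ex1 nat mso
  | Ex2 nat mso

fun sat :: "'a mstruct \<Rightarrow> (nat \<Rightarrow> 'a) \<Rightarrow> (nat \<Rightarrow> 'a set) \<Rightarrow> mso \<Rightarrow> bool" where
  "sat A I J (Rel1 r x) = rel1 A r (I x)"
| "sat A I J (Rel2 r x y) = rel2 A r (I x) (I y)"
| "sat A I J (Eq x y) = (I x = I y)"
| "sat A I J (Mem x X) = (I x \<in> J X)"
| "sat A I J (MNot \<phi>) = (\<not> sat A I J \<phi>)"
| "sat A I J (MAnd \<phi> \<psi>) = (sat A I J \<phi> \<and> sat A I J \<psi>)"
| "sat A I J (Ex1 x \<phi>) = (\<exists>a\<in>univ A. sat A (I(x := a)) J \<phi>)"
| "sat A I J (Ex2 X \<phi>) = (\<exists>S. S \<subseteq> univ A \<and> sat A I (J(X := S)) \<phi>)"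

fun fv1 :: "mso \<Rightarrow> nat set" where
  "fv1 (Rel1 r x) = {x}"
| "fv1 (Rel2 r x y) = {x, y}"
| "fv1 (Eq x y) = {x, y}"
| "fv1 (Mem x X) = {x}"
| "fv1 (MNot \<phi>) = fv1 \<phi>"
| "fv1 (MAnd \<phi> \<psi>) = fv1 \<phi> \<union> fv1 \<psi>"
| "fv1 (Ex1 x \<phi>) = fv1 \<phi> - {x}"
| "fv1 (Ex2 X \<phi>) = fv1 \<phi>"

fun fv2 :: "mso \<Rightarrow> nat set" where
  "fv2 (Mem x X) = {X}"
| "fv2 (MNot \<phi>) = fv2 \<phi>"
| "fv2 (MAnd \<phi> \<psi>) = fv2 \<phi> \<union> fv2 \<psi>"
| "fv2 (Ex1 x \<phi>) = fv2 \<phi>"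
| "fv2 (Ex2 X \<phi>) = fv2 \<phi> - {X}"
| "fv2 _ = {}"

definition sentence :: "mso \<Rightarrow> bool" where
  "sentence \<phi> \<longleftrightarrow> fv1 \<phi> = {} \<and> fv2 \<phi> = {}"

definition unary_sym :: "bf set \<Rightarrow> rsym \<Rightarrow> bool" where
  "unary_sym B r \<longleftrightarrow> (\<exists>f\<in>B. arity f = 0 \<and> r = ConstR f) \<or> r = LR \<or> r = ReprR"

definition binary_sym :: "bf set \<Rightarrow> rsym \<Rightarrow> bool" where
  "binary_sym B r \<longleftrightarrow> (\<exists>f\<in>B. \<exists>i. 1 \<le> i \<and> i \<le> arity f \<and> r = ConnR f i) \<or> r = LArgR"

fun mso_over :: "bf set \<Rightarrow> mso \<Rightarrow> bool" where
  "mso_over B (Rel1 r x) = unary_sym B r"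
| "mso_over B (Rel2 r x y) = binary_sym B r"
| "mso_over B (MNot \<phi>) = mso_over B \<phi>"
| "mso_over B (MAnd \<phi> \<psi>) = (mso_over B \<phi> \<and> mso_over B \<psi>)"
| "mso_over B (Ex1 x \<phi>) = mso_over B \<phi>"
| "mso_over B (Ex2 X \<phi>) = mso_over B \<phi>"
| "mso_over B _ = True"

definition models :: "'a mstruct \<Rightarrow> mso \<Rightarrow> bool" (infix "\<Turnstile>" 50) where
  "A \<Turnstile> \<theta> \<longleftrightarrow> sat A (\<lambda>_. undefined) (\<lambda>_. {}) \<theta>"

end

theory Submission
  imports Defs
begin


lemma subf_refl: "\<phi> \<in> subf \<phi>"
  by (cases \<phi>) auto

lemma subf_trans: "x \<in> subf y \<Longrightarrow> subf x \<subseteq> subf y"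
  by (induction y) auto

lemma wf_subf: "wf_over C \<phi> \<Longrightarrow> x \<in> subf \<phi> \<Longrightarrow> wf_over C x"
  by (induction \<phi>) auto

lemma wf_mono: "wf_over C \<phi> \<Longrightarrow> C \<subseteq> D \<Longrightarrow> wf_over D \<phi>"
  by (induction \<phi>) auto

lemma eval_cong: "(\<And>\<chi>. Lf \<chi> \<in> subf \<phi> \<Longrightarrow> w1 \<chi> = w2 \<chi>) \<Longrightarrow> eval v w1 \<phi> = eval v w2 \<phi>"
proof (induction \<phi>)
  case (App f xs)
  have "map (eval v w1) xs = map (eval v w2) xs"
    using App by (intro map_cong) auto
  then show ?case by (simp only: eval.simps)
qed auto

lemma bfun_neg: "bfun neg [b] = (\<not> b)" by (simp add: bfun_def neg_def)

lemma aelang_Lsub: "\<phi> \<in> aelang B \<Longrightarrow> Lf \<chi> \<in> subf \<phi> \<Longrightarrow> \<chi> \<in> aelang B"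
  unfolding aelang_def using wf_subf by fastforce

definition LS :: "'p aeform set \<Rightarrow> 'p aeform set" where
  "LS \<Sigma> = {\<psi>. Lf \<psi> \<in> (\<Union>\<sigma>\<in>\<Sigma>. subf \<sigma>)}"

lemma LS_closed: "\<psi> \<in> LS \<Sigma> \<Longrightarrow> Lf \<chi> \<in> subf \<psi> \<Longrightarrow> \<chi> \<in> LS \<Sigma>"
  unfolding LS_def using subf_trans by fastforce

lemma LS_sub: "\<sigma> \<in> \<Sigma> \<Longrightarrow> Lf \<chi> \<in> subf \<sigma> \<Longrightarrow> \<chi> \<in> LS \<Sigma>"
  unfolding LS_def by auto

lemma LS_aelang: "\<Sigma> \<subseteq> Bformulas B \<Longrightarrow> \<psi> \<in> LS \<Sigma> \<Longrightarrow> \<psi> \<in> aelang B"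
proof -
  assume S: "\<Sigma> \<subseteq> Bformulas B" and p: "\<psi> \<in> LS \<Sigma>"
  then obtain \<sigma> where s: "\<sigma> \<in> \<Sigma>" "Lf \<psi> \<in> subf \<sigma>" unfolding LS_def by blast
  then have "wf_over B \<sigma>" using S unfolding Bformulas_def by blast
  then have "wf_over B (Lf \<psi>)" using s(2) by (rule wf_subf)
  then have "wf_over (insert neg B) \<psi>" by (auto intro: wf_mono)
  then show ?thesis unfolding aelang_def by simp
qed

lemma Bf_aelang: "\<Sigma> \<subseteq> Bformulas B \<Longrightarrow> \<Sigma> \<subseteq> aelang B"
  unfolding Bformulas_def aelang_def by (auto intro: wf_mono)

lemma L1:
  assumes "\<Sigma> \<subseteq> aelang B" "\<phi> \<in> aelang B"
  shows "entails (\<Sigma> \<union> {Lf \<phi> | \<phi>. \<phi> \<in> \<Delta>} \<union> {NegL \<phi> | \<phi>. \<phi> \<in> aelang B \<and> \<phi> \<notin> \<Delta>}) \<phi>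
     \<longleftrightarrow> (\<forall>v. (\<forall>\<sigma>\<in>\<Sigma>. eval v (\<lambda>\<chi>. \<chi> \<in> \<Delta>) \<sigma>) \<longrightarrow> eval v (\<lambda>\<chi>. \<chi> \<in> \<Delta>) \<phi>)"
proof
  assume H: "entails (\<Sigma> \<union> {Lf \<phi> | \<phi>. \<phi> \<in> \<Delta>} \<union> {NegL \<phi> | \<phi>. \<phi> \<in> aelang B \<and> \<phi> \<notin> \<Delta>}) \<phi>"
  show "\<forall>v. (\<forall>\<sigma>\<in>\<Sigma>. eval v (\<lambda>\<chi>. \<chi> \<in> \<Delta>) \<sigma>) \<longrightarrow> eval v (\<lambda>\<chi>. \<chi> \<in> \<Delta>) \<phi>"
  proof (intro allI impI)
    fix v assume "\<forall>\<sigma>\<in>\<Sigma>. eval v (\<lambda>\<chi>. \<chi> \<in> \<Delta>) \<sigma>"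
    then have "\<forall>\<psi>\<in>\<Sigma> \<union> {Lf \<phi> | \<phi>. \<phi> \<in> \<Delta>} \<union> {NegL \<phi> | \<phi>. \<phi> \<in> aelang B \<and> \<phi> \<notin> \<Delta>}. eval v (\<lambda>\<chi>. \<chi> \<in> \<Delta>) \<psi>"
      by (auto simp: NegL_def bfun_neg)
    then show "eval v (\<lambda>\<chi>. \<chi> \<in> \<Delta>) \<phi>"
      using H unfolding entails_def by (elim allE impE)
  qed
next
  assume H: "\<forall>v. (\<forall>\<sigma>\<in>\<Sigma>. eval v (\<lambda>\<chi>. \<chi> \<in> \<Delta>) \<sigma>) \<longrightarrow> eval v (\<lambda>\<chi>. \<chi> \<in> \<Delta>) \<phi>"
  show "entails (\<Sigma> \<union> {Lf \<phi> | \<phi>. \<phi> \<in> \<Delta>} \<union> {NegL \<phi> | \<phi>. \<phi> \<in> aelang B \<and> \<phi> \<notin> \<Delta>}) \<phi>"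
    unfolding entails_def
  proof (intro allI impI)
    fix v w
    assume G: "\<forall>\<psi>\<in>\<Sigma> \<union> {Lf \<phi> | \<phi>. \<phi> \<in> \<Delta>} \<union> {NegL \<phi> | \<phi>. \<phi> \<in> aelang B \<and> \<phi> \<notin> \<Delta>}. eval v w \<psi>"
    have agree: "w \<chi> = (\<chi> \<in> \<Delta>)" if "\<chi> \<in> aelang B" for \<chi>
    proof (cases "\<chi> \<in> \<Delta>")
      case True
      then have "Lf \<chi> \<in> \<Sigma> \<union> {Lf \<phi> | \<phi>. \<phi> \<in> \<Delta>} \<union> {NegL \<phi> | \<phi>. \<phi> \<in> aelang B \<and> \<phi> \<notin> \<Delta>}" by blast
      then have "eval v w (Lf \<chi>)" using G by (rule bspec[rotated])
      then show ?thesis using True by simp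
    next
      case False
      then have "NegL \<chi> \<in> \<Sigma> \<union> {Lf \<phi> | \<phi>. \<phi> \<in> \<Delta>} \<union> {NegL \<phi> | \<phi>. \<phi> \<in> aelang B \<and> \<phi> \<notin> \<Delta>}" using that by blast
      then have "eval v w (NegL \<chi>)" using G by (rule bspec[rotated])
      then show ?thesis using False by (simp add: NegL_def bfun_neg)
    qed
    have "\<forall>\<sigma>\<in>\<Sigma>. eval v (\<lambda>\<chi>. \<chi> \<in> \<Delta>) \<sigma>"
    proof
      fix \<sigma> assume s: "\<sigma> \<in> \<Sigma>"
      have "eval v w \<sigma> = eval v (\<lambda>\<chi>. \<chi> \<in> \<Delta>) \<sigma>"
      proof (rule eval_cong)
        fix \<chi> assume "Lf \<chi> \<in> subf \<sigma>"
        then have "\<chi> \<in> aelang B" using s assms(1) aelang_Lsub by blast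
        then show "w \<chi> = (\<chi> \<in> \<Delta>)" by (rule agree)
      qed
      moreover have "eval v w \<sigma>" using G s by blast
      ultimately show "eval v (\<lambda>\<chi>. \<chi> \<in> \<Delta>) \<sigma>" by simp
    qed
    then have "eval v (\<lambda>\<chi>. \<chi> \<in> \<Delta>) \<phi>" using H by (elim allE impE)
    moreover have "eval v w \<phi> = eval v (\<lambda>\<chi>. \<chi> \<in> \<Delta>) \<phi>"
    proof (rule eval_cong)
      fix \<chi> assume "Lf \<chi> \<in> subf \<phi>"
      then have "\<chi> \<in> aelang B" using assms(2) aelang_Lsub by blast
      then show "w \<chi> = (\<chi> \<in> \<Delta>)" by (rule agree)
    qed
    ultimately show "eval v w \<phi>" by simp
  qed
qed

fun ev :: "('p \<Rightarrow> bool) set \<Rightarrow> bf set \<Rightarrow> ('p \<Rightarrow> bool) \<Rightarrow> 'p aeform \<Rightarrow> bool" where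
  "ev M B v (Prop p) = v p"
| "ev M B v (App f xs) = bfun f (map (ev M B v) xs)"
| "ev M B v (Lf \<phi>) = (\<phi> \<in> aelang B \<and> (\<forall>u\<in>M. ev M B u \<phi>))"

lemma eval_ev: "eval v (\<lambda>\<chi>. \<chi> \<in> aelang B \<and> (\<forall>u\<in>M. ev M B u \<chi>)) \<phi> = ev M B v \<phi>"
proof (induction \<phi>)
  case (App f xs)
  have "map (eval v (\<lambda>\<chi>. \<chi> \<in> aelang B \<and> (\<forall>u\<in>M. ev M B u \<chi>))) xs = map (ev M B v) xs"
    using App by (intro map_cong) auto
  then show ?case by (simp only: eval.simps ev.simps(2))
qed auto

definition char_E :: "bf set \<Rightarrow> 'p aeform set \<Rightarrow> 'p aeform set \<Rightarrow> bool" where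
  "char_E B \<Sigma> E \<longleftrightarrow> (\<forall>\<psi>\<in>LS \<Sigma>. (\<psi> \<in> E \<longleftrightarrow>
      (\<forall>v. (\<forall>\<sigma>\<in>\<Sigma>. eval v (\<lambda>\<chi>. \<chi> \<in> E) \<sigma>) \<longrightarrow> eval v (\<lambda>\<chi>. \<chi> \<in> E) \<psi>)))"

lemma char:
  assumes S: "\<Sigma> \<subseteq> Bformulas B"
  shows "has_stable_expansion B \<Sigma> \<longleftrightarrow> (\<exists>E. char_E B \<Sigma> E)"
proof
  assume "has_stable_expansion B \<Sigma>"
  then obtain \<Delta> where D: "stable_expansion B \<Sigma> \<Delta>" unfolding has_stable_expansion_def by blast
  have "char_E B \<Sigma> \<Delta>" unfolding char_E_def
  proof
    fix \<psi> assume p: "\<psi> \<in> LS \<Sigma>"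
    have pa: "\<psi> \<in> aelang B" using LS_aelang[OF S p] .
    have "\<psi> \<in> \<Delta> \<longleftrightarrow> \<psi> \<in> Th B (\<Sigma> \<union> {Lf \<phi> | \<phi>. \<phi> \<in> \<Delta>} \<union> {NegL \<phi> | \<phi>. \<phi> \<in> aelang B \<and> \<phi> \<notin> \<Delta>})"
      using D unfolding stable_expansion_def by (intro arg_cong[where f="\<lambda>X. \<psi> \<in> X"]) (rule conjunct2)
    also have "\<dots> \<longleftrightarrow> entails (\<Sigma> \<union> {Lf \<phi> | \<phi>. \<phi> \<in> \<Delta>} \<union> {NegL \<phi> | \<phi>. \<phi> \<in> aelang B \<and> \<phi> \<notin> \<Delta>}) \<psi>"
      using pa unfolding Th_def by simp
    also have "\<dots> \<longleftrightarrow> (\<forall>v. (\<forall>\<sigma>\<in>\<Sigma>. eval v (\<lambda>\<chi>. \<chi> \<in> \<Delta>) \<sigma>) \<longrightarrow> eval v (\<lambda>\<chi>. \<chi> \<in> \<Delta>) \<psi>)"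
      by (rule L1[OF Bf_aelang[OF S] pa])
    finally show "\<psi> \<in> \<Delta> \<longleftrightarrow> (\<forall>v. (\<forall>\<sigma>\<in>\<Sigma>. eval v (\<lambda>\<chi>. \<chi> \<in> \<Delta>) \<sigma>) \<longrightarrow> eval v (\<lambda>\<chi>. \<chi> \<in> \<Delta>) \<psi>)" .
  qed
  then show "\<exists>E. char_E B \<Sigma> E" by blast
next
  assume "\<exists>E. char_E B \<Sigma> E"
  then obtain E where E: "char_E B \<Sigma> E" by blast
  define M where "M = {v. \<forall>\<sigma>\<in>\<Sigma>. eval v (\<lambda>\<chi>. \<chi> \<in> E) \<sigma>}"
  define \<Delta> where "\<Delta> = {\<phi> \<in> aelang B. \<forall>u\<in>M. ev M B u \<phi>}"
  have evD: "eval v (\<lambda>\<chi>. \<chi> \<in> \<Delta>) \<phi> = ev M B v \<phi>" for v \<phi>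
    unfolding \<Delta>_def using eval_ev[of v B M \<phi>] by simp
  have agreeP: "\<forall>\<chi>. Lf \<chi> \<in> subf \<phi> \<longrightarrow> \<chi> \<in> LS \<Sigma> \<longrightarrow> (\<chi> \<in> \<Delta> \<longleftrightarrow> \<chi> \<in> E)" for \<phi>
  proof (induction \<phi>)
    case (Lf \<phi>)
    show ?case
    proof (intro allI impI)
      fix \<chi> assume c: "Lf \<chi> \<in> subf (Lf \<phi>)" "\<chi> \<in> LS \<Sigma>"
      show "\<chi> \<in> \<Delta> \<longleftrightarrow> \<chi> \<in> E"
      proof (cases "\<chi> = \<phi>")
        case False then show ?thesis using c Lf by auto
      next
        case True
        have cong: "eval v (\<lambda>\<chi>. \<chi> \<in> \<Delta>) \<chi> = eval v (\<lambda>\<chi>. \<chi> \<in> E) \<chi>" for v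
          by (rule eval_cong) (use Lf True c LS_closed in blast)
        have "\<chi> \<in> \<Delta> \<longleftrightarrow> (\<forall>u\<in>M. ev M B u \<chi>)"
          unfolding \<Delta>_def using LS_aelang[OF S c(2)] by simp
        also have "\<dots> \<longleftrightarrow> (\<forall>u\<in>M. eval u (\<lambda>\<chi>. \<chi> \<in> E) \<chi>)" using cong evD by simp
        also have "\<dots> \<longleftrightarrow> \<chi> \<in> E" using E c(2) unfolding char_E_def M_def by auto
        finally show ?thesis .
      qed
    qed
  qed auto
  have agree: "\<chi> \<in> LS \<Sigma> \<Longrightarrow> (\<chi> \<in> \<Delta> \<longleftrightarrow> \<chi> \<in> E)" for \<chi>
    using agreeP[of "Lf \<chi>"] by (auto simp: subf_refl)
  have satM: "(\<forall>\<sigma>\<in>\<Sigma>. eval v (\<lambda>\<chi>. \<chi> \<in> \<Delta>) \<sigma>) \<longleftrightarrow> v \<in> M" for v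
  proof -
    have "eval v (\<lambda>\<chi>. \<chi> \<in> \<Delta>) \<sigma> = eval v (\<lambda>\<chi>. \<chi> \<in> E) \<sigma>" if "\<sigma> \<in> \<Sigma>" for \<sigma>
      by (rule eval_cong) (use that agree LS_sub in blast)
    then show ?thesis unfolding M_def by auto
  qed
  have "stable_expansion B \<Sigma> \<Delta>"
    unfolding stable_expansion_def
  proof
    show "\<Delta> \<subseteq> aelang B" unfolding \<Delta>_def by blast
    show "\<Delta> = Th B (\<Sigma> \<union> {Lf \<phi> | \<phi>. \<phi> \<in> \<Delta>} \<union> {NegL \<phi> | \<phi>. \<phi> \<in> aelang B \<and> \<phi> \<notin> \<Delta>})"
    proof -
      have eqn: "\<phi> \<in> Th B (\<Sigma> \<union> {Lf \<phi> | \<phi>. \<phi> \<in> \<Delta>} \<union> {NegL \<phi> | \<phi>. \<phi> \<in> aelang B \<and> \<phi> \<notin> \<Delta>})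
          \<longleftrightarrow> \<phi> \<in> \<Delta>" for \<phi>
      proof (cases "\<phi> \<in> aelang B")
        case True
        have "\<phi> \<in> Th B (\<Sigma> \<union> {Lf \<phi> | \<phi>. \<phi> \<in> \<Delta>} \<union> {NegL \<phi> | \<phi>. \<phi> \<in> aelang B \<and> \<phi> \<notin> \<Delta>})
          \<longleftrightarrow> (\<forall>v. (\<forall>\<sigma>\<in>\<Sigma>. eval v (\<lambda>\<chi>. \<chi> \<in> \<Delta>) \<sigma>) \<longrightarrow> eval v (\<lambda>\<chi>. \<chi> \<in> \<Delta>) \<phi>)"
          unfolding Th_def using L1[OF Bf_aelang[OF S] True] True by simp
        also have "\<dots> \<longleftrightarrow> (\<forall>v\<in>M. ev M B v \<phi>)" using satM evD by (simp add: Ball_def)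
        also have "\<dots> \<longleftrightarrow> \<phi> \<in> \<Delta>" unfolding \<Delta>_def using True by simp
        finally show ?thesis .
      next
        case False then show ?thesis by (simp add: Th_def \<Delta>_def)
      qed
      show ?thesis by (rule set_eqI, rule eqn[symmetric])
    qed
  qed
  then show "has_stable_expansion B \<Sigma>" unfolding has_stable_expansion_def by blast
qed




definition MImp :: "mso \<Rightarrow> mso \<Rightarrow> mso" where "MImp a b = MNot (MAnd a (MNot b))"
definition MIff :: "mso \<Rightarrow> mso \<Rightarrow> mso" where "MIff a b = MAnd (MImp a b) (MImp b a)"
definition All1 :: "nat \<Rightarrow> mso \<Rightarrow> mso" where "All1 x a = MNot (Ex1 x (MNot a))"
definition All2 :: "nat \<Rightarrow> mso \<Rightarrow> mso" where "All2 x a = MNot (Ex2 x (MNot a))"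
definition MTrue :: mso where "MTrue = All1 0 (Eq 0 0)"

lemma sat_derived[simp]:
  "sat A I J (MImp a b) = (sat A I J a \<longrightarrow> sat A I J b)"
  "sat A I J (MIff a b) = (sat A I J a \<longleftrightarrow> sat A I J b)"
  "sat A I J (All1 x a) = (\<forall>u\<in>univ A. sat A (I(x := u)) J a)"
  "sat A I J (All2 X a) = (\<forall>S. S \<subseteq> univ A \<longrightarrow> sat A I (J(X := S)) a)"
  "sat A I J MTrue"
  by (auto simp: MImp_def MIff_def All1_def All2_def MTrue_def)

lemma fv_derived[simp]:
  "fv1 (MImp a b) = fv1 a \<union> fv1 b" "fv2 (MImp a b) = fv2 a \<union> fv2 b"
  "fv1 (MIff a b) = fv1 a \<union> fv1 b" "fv2 (MIff a b) = fv2 a \<union> fv2 b"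
  "fv1 (All1 x a) = fv1 a - {x}" "fv2 (All1 x a) = fv2 a"
  "fv1 (All2 X a) = fv1 a" "fv2 (All2 X a) = fv2 a - {X}"
  "fv1 MTrue = {}" "fv2 MTrue = {}"
  by (auto simp: MImp_def MIff_def All1_def All2_def MTrue_def)

lemma mso_over_derived[simp]:
  "mso_over B (MImp a b) = (mso_over B a \<and> mso_over B b)"
  "mso_over B (MIff a b) = (mso_over B a \<and> mso_over B b)"
  "mso_over B (All1 x a) = mso_over B a"
  "mso_over B (All2 X a) = mso_over B a"
  "mso_over B MTrue"
  by (auto simp: MImp_def MIff_def All1_def All2_def MTrue_def)

fun conjL :: "mso list \<Rightarrow> mso" where
  "conjL [] = MTrue"
| "conjL (a # as) = MAnd a (conjL as)"

lemma sat_conjL: "sat A I J (conjL as) = (\<forall>a\<in>set as. sat A I J a)"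
  by (induction as) auto

lemma fv_conjL: "fv1 (conjL as) = (\<Union>a\<in>set as. fv1 a)" "fv2 (conjL as) = (\<Union>a\<in>set as. fv2 a)"
  by (induction as) auto

lemma mso_conjL: "mso_over B (conjL as) = (\<forall>a\<in>set as. mso_over B a)"
  by (induction as) auto

fun TT :: "bf \<Rightarrow> nat \<Rightarrow> nat \<Rightarrow> bool list \<Rightarrow> mso" where
  "TT f 0 k bs = (if bfun f (rev bs) then Mem 0 1 else MNot (Mem 0 1))"
| "TT f (Suc m) k bs = MAnd (MImp (Mem k 1) (TT f m (Suc k) (True # bs)))
                            (MImp (MNot (Mem k 1)) (TT f m (Suc k) (False # bs)))"

lemma sat_TT: "sat A I J (TT f m k bs) = (I 0 \<in> J 1 \<longleftrightarrow> bfun f (rev bs @ map (\<lambda>i. I i \<in> J 1) [k..<k+m]))"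
proof (induction m arbitrary: k bs)
  case 0 then show ?case by auto
next
  case (Suc m)
  have u: "[k..<Suc (k + m)] = k # [Suc k..<Suc (k + m)]" by (simp add: upt_conv_Cons)
  show ?case by (cases "I k \<in> J 1") (simp_all add: Suc.IH u del: upt_Suc)
qed

lemma fv1_TT: "fv1 (TT f m k bs) \<subseteq> {0} \<union> {k..<k+m}"
proof (induction m arbitrary: k bs)
  case (Suc m)
  have a: "fv1 (TT f m (Suc k) b) \<subseteq> {0} \<union> {Suc k..<Suc k+m}" for b by (rule Suc.IH)
  have c: "{0} \<union> {Suc k..<Suc k+m} \<subseteq> {0} \<union> {k..<k+Suc m}" by auto
  show ?case using a[of "True # bs"] a[of "False # bs"] c by auto
qed auto

lemma fv2_TT: "fv2 (TT f m k bs) \<subseteq> {1}"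
  by (induction m arbitrary: k bs) auto

lemmas fv_TT = fv1_TT fv2_TT

lemma mso_TT: "mso_over B (TT f m k bs)"
  by (induction m arbitrary: k bs) auto

fun CH :: "bf \<Rightarrow> nat \<Rightarrow> nat \<Rightarrow> mso \<Rightarrow> mso" where
  "CH f 0 k body = body"
| "CH f (Suc m) k body = All1 k (MImp (Rel2 (ConnR f k) k 0) (CH f m (Suc k) body))"

lemma fv1_CH: "fv1 (CH f m k body) \<subseteq> {0} \<union> (fv1 body - {k..<k+m})"
proof (induction m arbitrary: k)
  case (Suc m)
  have a: "fv1 (CH f m (Suc k) body) \<subseteq> {0} \<union> (fv1 body - {Suc k..<Suc k+m})" by (rule Suc.IH)
  have c: "({k, 0} \<union> ({0} \<union> (fv1 body - {Suc k..<Suc k+m}))) - {k} \<subseteq> {0} \<union> (fv1 body - {k..<k+Suc m})" by auto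
  show ?case using a c by auto
qed auto

lemma fv2_CH: "fv2 (CH f m k body) = fv2 body"
  by (induction m arbitrary: k) auto

lemmas fv_CH = fv1_CH fv2_CH

lemma mso_CH: "f \<in> B \<Longrightarrow> 1 \<le> k \<Longrightarrow> k + m \<le> arity f + 1 \<Longrightarrow> mso_over B body \<Longrightarrow> mso_over B (CH f m k body)"
proof (induction m arbitrary: k)
  case (Suc m)
  then show ?case by (auto simp: binary_sym_def)
qed auto

definition ConsF :: "bf \<Rightarrow> mso" where
  "ConsF f = (if arity f = 0 then MImp (Rel1 (ConstR f) 0) (TT f 0 1 [])
              else CH f (arity f) 1 (TT f (arity f) 1 []))"

lemma fv_ConsF: "fv1 (ConsF f) \<subseteq> {0}" "fv2 (ConsF f) \<subseteq> {1}"
proof -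
  show "fv1 (ConsF f) \<subseteq> {0}"
  proof (cases "arity f = 0")
    case True then show ?thesis using fv_TT(1)[of f 0 1 "[]"] by (auto simp: ConsF_def)
  next
    case False
    have "fv1 (CH f (arity f) 1 (TT f (arity f) 1 [])) \<subseteq> {0}"
      using fv_CH(1)[of f "arity f" 1 "TT f (arity f) 1 []"] fv_TT(1)[of f "arity f" 1 "[]"] by auto
    then show ?thesis using False by (simp add: ConsF_def)
  qed
  show "fv2 (ConsF f) \<subseteq> {1}"
    using fv_TT(2) by (auto simp: ConsF_def fv_CH(2))
qed

lemma mso_ConsF: "f \<in> B \<Longrightarrow> mso_over B (ConsF f)"
  by (auto simp: ConsF_def mso_TT unary_sym_def intro!: mso_CH)

definition ConsT :: "bf list \<Rightarrow> mso" where
  "ConsT bl = All1 0 (MAnd (MImp (Rel1 LR 0) (MIff (Mem 0 1) (Mem 0 0))) (conjL (map ConsF bl)))"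

definition ReprT :: mso where "ReprT = All1 0 (MImp (Rel1 ReprR 0) (Mem 0 1))"

definition theta :: "bf list \<Rightarrow> mso" where
  "theta bl = Ex2 0 (All1 1 (MImp (Rel1 LR 1) (All1 0 (MImp (Rel2 LArgR 0 1)
      (MIff (Mem 1 0) (All2 1 (MImp (MAnd (ConsT bl) ReprT) (Mem 0 1))))))))"

lemma fv_ConsT: "fv1 (ConsT bl) = {}" "fv2 (ConsT bl) \<subseteq> {0, 1}"
  using fv_ConsF by (fastforce simp: ConsT_def fv_conjL)+

lemma sentence_theta: "sentence (theta bl)"
  unfolding sentence_def theta_def ReprT_def using fv_ConsT by auto

lemma mso_theta: "set bl \<subseteq> B \<Longrightarrow> mso_over B (theta bl)"
  by (auto simp: theta_def ConsT_def ReprT_def mso_conjL mso_ConsF unary_sym_def binary_sym_def)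




abbreviation SF :: "'p aeform set \<Rightarrow> 'p aeform set" where
  "SF \<Sigma> \<equiv> (\<Union>\<sigma>\<in>\<Sigma>. subf \<sigma>)"

lemma subf_NegL: "subf (NegL \<psi>) = insert (NegL \<psi>) (subf (Lf \<psi>))"
  by (simp add: NegL_def)

lemma U0: "y \<in> AUniv \<Sigma> \<Longrightarrow> y \<in> SF \<Sigma> \<or> (\<exists>\<psi>. y = NegL \<psi> \<and> Lf \<psi> \<in> SF \<Sigma>)"
proof -
  assume "y \<in> AUniv \<Sigma>"
  then obtain \<phi> where p: "\<phi> \<in> \<Sigma> \<union> {NegL \<psi> | \<psi>. Lf \<psi> \<in> SF \<Sigma>}" "y \<in> subf \<phi>"
    unfolding AUniv_def by blast
  show ?thesis
  proof (cases "\<phi> \<in> \<Sigma>")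
    case True then show ?thesis using p by blast
  next
    case False
    then obtain \<psi> where q: "\<phi> = NegL \<psi>" "Lf \<psi> \<in> SF \<Sigma>" using p by blast
    then obtain \<sigma> where s: "\<sigma> \<in> \<Sigma>" "Lf \<psi> \<in> subf \<sigma>" by blast
    have "y = NegL \<psi> \<or> y \<in> subf (Lf \<psi>)" using p(2) q(1) subf_NegL by blast
    then show ?thesis
    proof
      assume "y \<in> subf (Lf \<psi>)"
      then have "y \<in> subf \<sigma>" using subf_trans[OF s(2)] by blast
      then show ?thesis using s by blast
    qed (use q in blast)
  qed
qed

lemma SF_U: "SF \<Sigma> \<subseteq> AUniv \<Sigma>"
  unfolding AUniv_def by blast

lemma U_closed: "y \<in> AUniv \<Sigma> \<Longrightarrow> x \<in> subf y \<Longrightarrow> x \<in> AUniv \<Sigma>"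
  unfolding AUniv_def using subf_trans by blast

lemma Sigma_U: "\<Sigma> \<subseteq> AUniv \<Sigma>"
  using SF_U subf_refl by blast

lemma SF_wf: "\<Sigma> \<subseteq> Bformulas B \<Longrightarrow> y \<in> SF \<Sigma> \<Longrightarrow> wf_over B y"
  unfolding Bformulas_def using wf_subf by blast

lemma U_Lf: "Lf \<psi> \<in> AUniv \<Sigma> \<Longrightarrow> \<psi> \<in> LS \<Sigma>"
  using U0[of "Lf \<psi>" \<Sigma>] unfolding LS_def by (auto simp: NegL_def)

lemma LS_U: "\<psi> \<in> LS \<Sigma> \<Longrightarrow> Lf \<psi> \<in> AUniv \<Sigma> \<and> \<psi> \<in> AUniv \<Sigma>"
proof -
  assume "\<psi> \<in> LS \<Sigma>"
  then have a: "Lf \<psi> \<in> AUniv \<Sigma>" unfolding LS_def using SF_U by blast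
  then have "\<psi> \<in> AUniv \<Sigma>" by (rule U_closed) (simp add: subf_refl)
  with a show ?thesis by blast
qed

lemma U_len:
  assumes S: "\<Sigma> \<subseteq> Bformulas B" and y: "App f xs \<in> AUniv \<Sigma>" and f: "f \<in> B"
  shows "length xs = arity f"
proof -
  from U0[OF y] show ?thesis
  proof
    assume "App f xs \<in> SF \<Sigma>"
    then have "wf_over B (App f xs)" using SF_wf[OF S] by blast
    then show ?thesis by simp
  next
    assume "\<exists>\<psi>. App f xs = NegL \<psi> \<and> Lf \<psi> \<in> SF \<Sigma>"
    then show ?thesis by (auto simp: NegL_def neg_def arity_def)
  qed
qed

lemma U_children: "App f xs \<in> AUniv \<Sigma> \<Longrightarrow> set xs \<subseteq> AUniv \<Sigma>"
  using U_closed subf_refl by fastforce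

lemma A_simps[simp]: "univ (A_Sigma B \<Sigma>) = AUniv \<Sigma>" "rel1 (A_Sigma B \<Sigma>) = A_rel1 B \<Sigma>"
  "rel2 (A_Sigma B \<Sigma>) = A_rel2 B \<Sigma>"
  by (simp_all add: A_Sigma_def)

lemma sat_CH:
  assumes S: "\<Sigma> \<subseteq> Bformulas B" and f: "f \<in> B"
  shows "I 0 = App f xs \<Longrightarrow> set xs \<subseteq> AUniv \<Sigma> \<Longrightarrow> length xs = arity f \<Longrightarrow> 1 \<le> k \<Longrightarrow> k + m = arity f + 1
    \<Longrightarrow> (\<forall>i. 1 \<le> i \<and> i < k \<longrightarrow> I i = xs ! (i - 1))
    \<Longrightarrow> sat (A_Sigma B \<Sigma>) I J (CH f m k (TT f (arity f) 1 []))
        = (I 0 \<in> J 1 \<longleftrightarrow> bfun f (map (\<lambda>x. x \<in> J 1) xs))"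
proof (induction m arbitrary: k I)
  case 0
  have "map (\<lambda>i. I i \<in> J 1) [1..<1 + arity f] = map (\<lambda>x. x \<in> J 1) xs"
  proof (rule nth_equalityI)
    fix j assume "j < length (map (\<lambda>i. I i \<in> J 1) [1..<1 + arity f])"
    then have j: "j < arity f" by (simp del: upt_Suc)
    have "I (Suc j) = xs ! j" using 0 j by auto
    then show "map (\<lambda>i. I i \<in> J 1) [1..<1 + arity f] ! j = map (\<lambda>x. x \<in> J 1) xs ! j"
      using j 0 by (simp del: upt_Suc)
  qed (use 0 in \<open>simp del: upt_Suc\<close>)
  then show ?case by (simp add: sat_TT)
next
  case (Suc m)
  let ?a = "xs ! (k - 1)"
  have kn: "k \<le> arity f" using Suc.prems by simp
  have aU: "?a \<in> AUniv \<Sigma>" using Suc.prems kn by (auto intro: nth_mem)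
  have I0: "(I(k := u)) 0 = I 0" for u using Suc.prems by simp
  have rel: "A_rel2 B \<Sigma> (ConnR f k) u (I 0) \<longleftrightarrow> u = ?a" for u
    using Suc.prems kn f by auto
  have IH: "sat (A_Sigma B \<Sigma>) (I(k := ?a)) J (CH f m (Suc k) (TT f (arity f) 1 []))
        = ((I(k := ?a)) 0 \<in> J 1 \<longleftrightarrow> bfun f (map (\<lambda>x. x \<in> J 1) xs))"
  proof (rule Suc.IH)
    show "\<forall>i. 1 \<le> i \<and> i < Suc k \<longrightarrow> (I(k := ?a)) i = xs ! (i - 1)"
      using Suc.prems by (auto simp: less_Suc_eq)
  qed (use Suc.prems in auto)
  have "sat (A_Sigma B \<Sigma>) I J (CH f (Suc m) k (TT f (arity f) 1 [])) \<longleftrightarrow>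
     (\<forall>u\<in>AUniv \<Sigma>. A_rel2 B \<Sigma> (ConnR f k) u (I 0) \<longrightarrow> sat (A_Sigma B \<Sigma>) (I(k:=u)) J (CH f m (Suc k) (TT f (arity f) 1 [])))"
    using Suc.prems by (simp del: A_rel2.simps)
  also have "\<dots> \<longleftrightarrow> sat (A_Sigma B \<Sigma>) (I(k:=?a)) J (CH f m (Suc k) (TT f (arity f) 1 []))"
    using aU by (simp only: rel) blast
  finally show ?case using IH I0 by simp
qed

lemma sat_CH_vac:
  "\<not> (\<exists>xs. I 0 = App f xs) \<Longrightarrow> 1 \<le> k \<Longrightarrow> sat (A_Sigma B \<Sigma>) I J (CH f (Suc m) k body)"
  by auto

lemma sat_ConsF:
  assumes S: "\<Sigma> \<subseteq> Bformulas B" and f: "f \<in> B" and y: "I 0 \<in> AUniv \<Sigma>"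
  shows "sat (A_Sigma B \<Sigma>) I J (ConsF f) =
     (\<forall>xs. I 0 = App f xs \<longrightarrow> (I 0 \<in> J 1 \<longleftrightarrow> bfun f (map (\<lambda>x. x \<in> J 1) xs)))"
proof (cases "arity f = 0")
  case True
  have "I 0 = App f xs \<Longrightarrow> xs = []" for xs using U_len[OF S _ f] y True by fastforce
  then show ?thesis using True f by (auto simp: ConsF_def sat_TT)
next
  case False
  then obtain m where m: "arity f = Suc m" by (cases "arity f") auto
  show ?thesis
  proof (cases "\<exists>xs. I 0 = App f xs")
    case True
    then obtain xs where xs: "I 0 = App f xs" by blast
    have "sat (A_Sigma B \<Sigma>) I J (CH f (arity f) 1 (TT f (arity f) 1 []))
        = (I 0 \<in> J 1 \<longleftrightarrow> bfun f (map (\<lambda>x. x \<in> J 1) xs))"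
    proof (rule sat_CH[OF S f, where I=I and xs=xs and k=1 and m="arity f"])
      show "set xs \<subseteq> AUniv \<Sigma>" using U_children y xs by metis
      show "length xs = arity f" using U_len[OF S _ f] y xs by metis
    qed (use xs in auto)
    then show ?thesis using False xs by (simp add: ConsF_def)
  next
    case False2: False
    then show ?thesis using False m by (simp add: ConsF_def del: CH.simps) (rule sat_CH_vac, auto)
  qed
qed

definition ConsP :: "bf set \<Rightarrow> 'p aeform set \<Rightarrow> 'p aeform set \<Rightarrow> 'p aeform set \<Rightarrow> bool" where
  "ConsP B \<Sigma> E T \<longleftrightarrow> (\<forall>y\<in>AUniv \<Sigma>. ((\<exists>\<psi>. y = Lf \<psi>) \<longrightarrow> (y \<in> T \<longleftrightarrow> y \<in> E)) \<and>
      (\<forall>f\<in>B. \<forall>xs. y = App f xs \<longrightarrow> (y \<in> T \<longleftrightarrow> bfun f (map (\<lambda>x. x \<in> T) xs))))"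

lemma sat_ConsT:
  assumes S: "\<Sigma> \<subseteq> Bformulas B" and bl: "set bl = B"
  shows "sat (A_Sigma B \<Sigma>) I J (ConsT bl) = ConsP B \<Sigma> (J 0) (J 1)"
  unfolding ConsT_def ConsP_def using sat_ConsF[OF S] bl
  by (simp add: sat_conjL)

lemma sat_ReprT: "sat (A_Sigma B \<Sigma>) I J ReprT = (\<Sigma> \<subseteq> J 1)"
  unfolding ReprT_def using Sigma_U by auto




lemma E1:
  assumes S: "\<Sigma> \<subseteq> Bformulas B" and C: "ConsP B \<Sigma> E T"
  shows "y \<in> AUniv \<Sigma> \<Longrightarrow> wf_over B y \<Longrightarrow> (y \<in> T \<longleftrightarrow> eval (\<lambda>p. Prop p \<in> T) (\<lambda>\<chi>. Lf \<chi> \<in> E) y)"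
proof (induction y)
  case (Prop p) then show ?case by simp
next
  case (App f xs)
  have f: "f \<in> B" using App.prems by simp
  have "App f xs \<in> T \<longleftrightarrow> bfun f (map (\<lambda>x. x \<in> T) xs)"
    using C App.prems(1) f unfolding ConsP_def by blast
  moreover have "map (\<lambda>x. x \<in> T) xs = map (eval (\<lambda>p. Prop p \<in> T) (\<lambda>\<chi>. Lf \<chi> \<in> E)) xs"
  proof (rule map_cong[OF refl])
    fix x assume x: "x \<in> set xs"
    have "x \<in> AUniv \<Sigma>" using U_children[OF App.prems(1)] x by blast
    moreover have "wf_over B x" using App.prems(2) x by simp
    ultimately show "(x \<in> T) = eval (\<lambda>p. Prop p \<in> T) (\<lambda>\<chi>. Lf \<chi> \<in> E) x" using App.IH x by blast
  qed
  ultimately show ?case by simp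
next
  case (Lf \<phi>)
  then show ?case using C unfolding ConsP_def by auto
qed

lemma E2:
  "ConsP B \<Sigma> E {y \<in> AUniv \<Sigma>. eval v (\<lambda>\<chi>. Lf \<chi> \<in> E) y}"
  unfolding ConsP_def
proof (intro ballI conjI impI allI)
  fix y assume y: "y \<in> AUniv \<Sigma>"
  {
    assume "\<exists>\<psi>. y = Lf \<psi>"
    then show "(y \<in> {y \<in> AUniv \<Sigma>. eval v (\<lambda>\<chi>. Lf \<chi> \<in> E) y}) = (y \<in> E)" using y by auto
  }
  fix f xs assume yy: "y = App f xs"
  have ch: "set xs \<subseteq> AUniv \<Sigma>" using U_children y yy by metis
  have m: "map (\<lambda>x. x \<in> {y \<in> AUniv \<Sigma>. eval v (\<lambda>\<chi>. Lf \<chi> \<in> E) y}) xs = map (eval v (\<lambda>\<chi>. Lf \<chi> \<in> E)) xs"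
    using ch by (intro map_cong) auto
  show "(y \<in> {y \<in> AUniv \<Sigma>. eval v (\<lambda>\<chi>. Lf \<chi> \<in> E) y}) = bfun f (map (\<lambda>x. x \<in> {y \<in> AUniv \<Sigma>. eval v (\<lambda>\<chi>. Lf \<chi> \<in> E) y}) xs)"
    unfolding m using y yy by simp
qed

lemma IE:
  assumes S: "\<Sigma> \<subseteq> Bformulas B" and x: "x \<in> AUniv \<Sigma>" "wf_over B x"
  shows "(\<forall>T. T \<subseteq> AUniv \<Sigma> \<longrightarrow> ConsP B \<Sigma> E T \<and> \<Sigma> \<subseteq> T \<longrightarrow> x \<in> T) \<longleftrightarrow>
         (\<forall>v. (\<forall>\<sigma>\<in>\<Sigma>. eval v (\<lambda>\<chi>. Lf \<chi> \<in> E) \<sigma>) \<longrightarrow> eval v (\<lambda>\<chi>. Lf \<chi> \<in> E) x)"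
proof
  assume H: "\<forall>T. T \<subseteq> AUniv \<Sigma> \<longrightarrow> ConsP B \<Sigma> E T \<and> \<Sigma> \<subseteq> T \<longrightarrow> x \<in> T"
  show "\<forall>v. (\<forall>\<sigma>\<in>\<Sigma>. eval v (\<lambda>\<chi>. Lf \<chi> \<in> E) \<sigma>) \<longrightarrow> eval v (\<lambda>\<chi>. Lf \<chi> \<in> E) x"
  proof (intro allI impI)
    fix v assume sv: "\<forall>\<sigma>\<in>\<Sigma>. eval v (\<lambda>\<chi>. Lf \<chi> \<in> E) \<sigma>"
    let ?T = "{y \<in> AUniv \<Sigma>. eval v (\<lambda>\<chi>. Lf \<chi> \<in> E) y}"
    have "\<Sigma> \<subseteq> ?T" using sv Sigma_U by blast
    moreover have "?T \<subseteq> AUniv \<Sigma>" by blast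
    ultimately have "x \<in> ?T" using H E2[of B \<Sigma> E v] by (elim allE impE) auto
    then show "eval v (\<lambda>\<chi>. Lf \<chi> \<in> E) x" by blast
  qed
next
  assume H: "\<forall>v. (\<forall>\<sigma>\<in>\<Sigma>. eval v (\<lambda>\<chi>. Lf \<chi> \<in> E) \<sigma>) \<longrightarrow> eval v (\<lambda>\<chi>. Lf \<chi> \<in> E) x"
  show "\<forall>T. T \<subseteq> AUniv \<Sigma> \<longrightarrow> ConsP B \<Sigma> E T \<and> \<Sigma> \<subseteq> T \<longrightarrow> x \<in> T"
  proof (intro allI impI)
    fix T assume T: "T \<subseteq> AUniv \<Sigma>" "ConsP B \<Sigma> E T \<and> \<Sigma> \<subseteq> T"
    have "\<forall>\<sigma>\<in>\<Sigma>. eval (\<lambda>p. Prop p \<in> T) (\<lambda>\<chi>. Lf \<chi> \<in> E) \<sigma>"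
    proof
      fix \<sigma> assume s: "\<sigma> \<in> \<Sigma>"
      have "wf_over B \<sigma>" using S s unfolding Bformulas_def by blast
      then show "eval (\<lambda>p. Prop p \<in> T) (\<lambda>\<chi>. Lf \<chi> \<in> E) \<sigma>"
      proof -
        have "\<sigma> \<in> AUniv \<Sigma>" using s Sigma_U by blast
        moreover have "\<sigma> \<in> T" using T s by blast
        ultimately show ?thesis using E1[OF S, of E T \<sigma>] T \<open>wf_over B \<sigma>\<close> by simp
      qed
    qed
    then have "eval (\<lambda>p. Prop p \<in> T) (\<lambda>\<chi>. Lf \<chi> \<in> E) x" using H by (elim allE impE)
    then show "x \<in> T" using E1[OF S, of E T x] T x by simp
  qed
qed

lemma sat_theta:
  assumes S: "\<Sigma> \<subseteq> Bformulas B" and bl: "set bl = B"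
  shows "A_Sigma B \<Sigma> \<Turnstile> theta bl \<longleftrightarrow>
    (\<exists>E'. E' \<subseteq> AUniv \<Sigma> \<and> (\<forall>z\<in>AUniv \<Sigma>. (\<exists>\<psi>. z = Lf \<psi>) \<longrightarrow> (\<forall>x\<in>AUniv \<Sigma>. z = Lf x \<longrightarrow>
       (z \<in> E' \<longleftrightarrow> (\<forall>T. T \<subseteq> AUniv \<Sigma> \<longrightarrow> ConsP B \<Sigma> E' T \<and> \<Sigma> \<subseteq> T \<longrightarrow> x \<in> T)))))"
  unfolding models_def theta_def by (simp add: sat_ConsT[OF S bl] sat_ReprT)

lemma char_restrict:
  assumes "char_E B \<Sigma> E" shows "char_E B \<Sigma> (E \<inter> LS \<Sigma>)"
  unfolding char_E_def
proof
  fix \<psi> assume p: "\<psi> \<in> LS \<Sigma>"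
  have c1: "eval v (\<lambda>\<chi>. \<chi> \<in> E \<inter> LS \<Sigma>) \<sigma> = eval v (\<lambda>\<chi>. \<chi> \<in> E) \<sigma>" if "\<sigma> \<in> \<Sigma>" for v \<sigma>
    by (rule eval_cong) (use that LS_sub in blast)
  have c2: "eval v (\<lambda>\<chi>. \<chi> \<in> E \<inter> LS \<Sigma>) \<psi> = eval v (\<lambda>\<chi>. \<chi> \<in> E) \<psi>" for v
    by (rule eval_cong) (use p LS_closed in blast)
  show "(\<psi> \<in> E \<inter> LS \<Sigma>) = (\<forall>v. (\<forall>\<sigma>\<in>\<Sigma>. eval v (\<lambda>\<chi>. \<chi> \<in> E \<inter> LS \<Sigma>) \<sigma>) \<longrightarrow> eval v (\<lambda>\<chi>. \<chi> \<in> E \<inter> LS \<Sigma>) \<psi>)"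
    using assms p c1 c2 unfolding char_E_def by simp
qed

lemma main_equiv:
  assumes S: "\<Sigma> \<subseteq> Bformulas B"
  shows "(\<exists>E. char_E B \<Sigma> E) \<longleftrightarrow>
    (\<exists>E'. E' \<subseteq> AUniv \<Sigma> \<and> (\<forall>z\<in>AUniv \<Sigma>. (\<exists>\<psi>. z = Lf \<psi>) \<longrightarrow> (\<forall>x\<in>AUniv \<Sigma>. z = Lf x \<longrightarrow>
       (z \<in> E' \<longleftrightarrow> (\<forall>T. T \<subseteq> AUniv \<Sigma> \<longrightarrow> ConsP B \<Sigma> E' T \<and> \<Sigma> \<subseteq> T \<longrightarrow> x \<in> T)))))"
    (is "?L \<longleftrightarrow> ?R")
proof
  have wfx: "wf_over B x" if "Lf x \<in> AUniv \<Sigma>" for x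
  proof -
    have "x \<in> LS \<Sigma>" using U_Lf that .
    then have "Lf x \<in> SF \<Sigma>" unfolding LS_def by blast
    then have "wf_over B (Lf x)" using SF_wf[OF S] by blast
    then show ?thesis by simp
  qed
  {
    assume ?L
    then obtain E0 where "char_E B \<Sigma> E0" by blast
    then have E: "char_E B \<Sigma> (E0 \<inter> LS \<Sigma>)" by (rule char_restrict)
    define E where "E = E0 \<inter> LS \<Sigma>"
    define E' where "E' = Lf ` E"
    have W: "(\<lambda>\<chi>. Lf \<chi> \<in> E') = (\<lambda>\<chi>. \<chi> \<in> E)" unfolding E'_def by auto
    have sub: "E' \<subseteq> AUniv \<Sigma>" unfolding E'_def E_def using LS_U by blast
    show ?R
    proof (intro exI conjI ballI impI allI)
      show "E' \<subseteq> AUniv \<Sigma>" by (rule sub)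
      fix z x assume z: "z \<in> AUniv \<Sigma>" and x: "x \<in> AUniv \<Sigma>" and zx: "z = Lf x"
      have xl: "x \<in> LS \<Sigma>" using U_Lf z zx by blast
      have "(\<forall>T. T \<subseteq> AUniv \<Sigma> \<longrightarrow> ConsP B \<Sigma> E' T \<and> \<Sigma> \<subseteq> T \<longrightarrow> x \<in> T) \<longleftrightarrow>
         (\<forall>v. (\<forall>\<sigma>\<in>\<Sigma>. eval v (\<lambda>\<chi>. Lf \<chi> \<in> E') \<sigma>) \<longrightarrow> eval v (\<lambda>\<chi>. Lf \<chi> \<in> E') x)"
        by (rule IE[OF S x wfx]) (use z zx in simp)
      also have "\<dots> \<longleftrightarrow> x \<in> E" using E xl unfolding W E_def char_E_def by blast
      also have "\<dots> \<longleftrightarrow> z \<in> E'" unfolding E'_def zx by blast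
      finally show "(z \<in> E') = (\<forall>T. T \<subseteq> AUniv \<Sigma> \<longrightarrow> ConsP B \<Sigma> E' T \<and> \<Sigma> \<subseteq> T \<longrightarrow> x \<in> T)" by simp
    qed
  }
  {
    assume ?R
    then obtain E' where E': "E' \<subseteq> AUniv \<Sigma>" "\<forall>z\<in>AUniv \<Sigma>. (\<exists>\<psi>. z = Lf \<psi>) \<longrightarrow> (\<forall>x\<in>AUniv \<Sigma>. z = Lf x \<longrightarrow>
       (z \<in> E' \<longleftrightarrow> (\<forall>T. T \<subseteq> AUniv \<Sigma> \<longrightarrow> ConsP B \<Sigma> E' T \<and> \<Sigma> \<subseteq> T \<longrightarrow> x \<in> T)))" by blast
    define E where "E = {\<chi>. Lf \<chi> \<in> E'}"
    have W: "(\<lambda>\<chi>. \<chi> \<in> E) = (\<lambda>\<chi>. Lf \<chi> \<in> E')" unfolding E_def by auto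
    have "char_E B \<Sigma> E" unfolding char_E_def W
    proof
      fix \<psi> assume p: "\<psi> \<in> LS \<Sigma>"
      have U: "Lf \<psi> \<in> AUniv \<Sigma>" "\<psi> \<in> AUniv \<Sigma>" using LS_U[OF p] by auto
      have "\<psi> \<in> E \<longleftrightarrow> Lf \<psi> \<in> E'" unfolding E_def by simp
      also have "\<dots> \<longleftrightarrow> (\<forall>T. T \<subseteq> AUniv \<Sigma> \<longrightarrow> ConsP B \<Sigma> E' T \<and> \<Sigma> \<subseteq> T \<longrightarrow> \<psi> \<in> T)"
        using E'(2) U by blast
      also have "\<dots> \<longleftrightarrow> (\<forall>v. (\<forall>\<sigma>\<in>\<Sigma>. eval v (\<lambda>\<chi>. Lf \<chi> \<in> E') \<sigma>) \<longrightarrow> eval v (\<lambda>\<chi>. Lf \<chi> \<in> E') \<psi>)"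
        by (rule IE[OF S U(2) wfx[OF U(1)]])
      finally show "(\<psi> \<in> E) = (\<forall>v. (\<forall>\<sigma>\<in>\<Sigma>. eval v (\<lambda>\<chi>. Lf \<chi> \<in> E') \<sigma>) \<longrightarrow> eval v (\<lambda>\<chi>. Lf \<chi> \<in> E') \<psi>)" .
    qed
    then show ?L by blast
  }
qed

theorem lemma4:
  fixes B :: "bf set"
  assumes "finite B"
  shows "\<exists>\<theta>. mso_over B \<theta> \<and> sentence \<theta> \<and>
           (\<forall>\<Sigma> :: 'p aeform set. \<Sigma> \<subseteq> Bformulas B \<longrightarrow>
              (has_stable_expansion B \<Sigma> \<longleftrightarrow> A_Sigma B \<Sigma> \<Turnstile> \<theta>))"
proof -
  obtain bl where bl: "set bl = B" using finite_list[OF assms] by blast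
  show ?thesis
  proof (intro exI conjI allI impI)
    show "mso_over B (theta bl)" using mso_theta bl by blast
    show "sentence (theta bl)" by (rule sentence_theta)
    fix \<Sigma> :: "'p aeform set" assume S: "\<Sigma> \<subseteq> Bformulas B"
    show "has_stable_expansion B \<Sigma> \<longleftrightarrow> A_Sigma B \<Sigma> \<Turnstile> theta bl"
      using char[OF S] main_equiv[OF S] sat_theta[OF S bl] by simp
  qed
qed


end
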